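(* Let $g\in\mathscr T'$ and $f\in\mathscr T$. For $n\in\mathbb N$ let $\varepsilon_n(f)\in\mathcal F_{\rm fin}(\mathscr T)$ be the vector whose only nonzero component is the $n$-particle component $\frac{1}{\sqrt{n!}}f^{\otimes n}$. Then the series $\varepsilon(f)=\sum_{n\ge0}\varepsilon_n(f)$ converges absolutely in $\mathcal F_g$ (denote its sum $\varepsilon_g(f)$) and in $\mathcal F_0=\mathcal F(\mathfrak h)$ (sum $\varepsilon_0(f)$), and $$U_{g,0}\,\varepsilon_g(f)=e^{\langle g,f\rangle}\,\varepsilon_0(f),$$ where $U_{g,0}:\mathcal F_g\to\mathcal F_0$ is the continuous extension of $\Psi\mapsto e^{a(g)}\Psi$, $\Psi\in\mathcal F_{\rm fin}(\mathscr T)$.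
   Context: Let $\mathfrak h$ be a complex Hilbert space, $\mathscr T$ a topological vector space continuously embedded in $\mathfrak h$ with dense image, $\mathscr T'$ the space of continuous antilinear functionals on $\mathscr T$; write $\langle\varphi,f\rangle:=\overline{\varphi(f)}$ for $\varphi\in\mathscr T'$, $f\in\mathscr T$. $\mathcal F(\mathfrak h)$ is the symmetric Fock space; $\mathcal F_{\rm fin}(\mathscr T)$ the vectors with finitely many nonzero components, the $n$-th in the algebraic symmetric tensor product of $n$ copies of $\mathscr T$. For $g\in\mathscr T'$, $a(g)$ on $\mathcal F_{\rm fin}(\mathscr T)$ is defined linearly by $(a(g)\Psi)_n=\frac{\sqrt{n+1}}{(n+1)!}\sum_{\sigma\in S_{n+1}}\langle g,\psi_{\sigma(1)}\rangle\psi_{\sigma(2)}\otimes\cdots\otimes\psi_{\sigma(n+1)}$ for $\Psi_{n+1}=\psi_1\otimes_s\cdots\otimes_s\psi_{n+1}$; $e^{a(g)}=\sum_k a(g)^k/k!$ (finite sum). $\mathcal F_g$ is the completion of $\mathcal F_{\rm fin}(\mathscr T)$ in the inner product $\langle\Psi,\Phi\rangle_g:=\langle e^{a(g)}\Psi,e^{a(g)}\Phi\rangle_{\mathcal F(\mathfrak h)}$. *)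

theory Defs
  imports "HOL-Analysis.Analysis" "HOL-Combinatorics.Permutations"
begin

text \<open>Main/HOL-Analysis provide only real vector spaces, so complex vector spaces
  are introduced as a type class with a complex scalar multiplication.\<close>

class cvec = ab_group_add +
  fixes cscale :: "complex \<Rightarrow> 'a \<Rightarrow> 'a"  (infixr \<open>*\<^sub>C\<close> 75)
  assumes cscale_add_right: "a *\<^sub>C (x + y) = a *\<^sub>C x + a *\<^sub>C y"
    and cscale_add_left: "(a + b) *\<^sub>C x = a *\<^sub>C x + b *\<^sub>C x"
    and cscale_cscale: "a *\<^sub>C (b *\<^sub>C x) = (a * b) *\<^sub>C x"
    and cscale_one: "1 *\<^sub>C x = x"

definition hnorm :: "('h \<Rightarrow> 'h \<Rightarrow> complex) \<Rightarrow> 'h \<Rightarrow> real" where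
  "hnorm ip x = sqrt (Re (ip x x))"

definition is_hilbert :: "('h::cvec \<Rightarrow> 'h \<Rightarrow> complex) \<Rightarrow> bool" where
  "is_hilbert ip \<longleftrightarrow>
     (\<forall>x y z. ip x (y + z) = ip x y + ip x z) \<and>
     (\<forall>x y c. ip x (c *\<^sub>C y) = c * ip x y) \<and>
     (\<forall>x y. ip x y = cnj (ip y x)) \<and>
     (\<forall>x. Im (ip x x) = 0 \<and> Re (ip x x) \<ge> 0) \<and>
     (\<forall>x. ip x x = 0 \<longrightarrow> x = 0) \<and>
     (\<forall>X :: nat \<Rightarrow> 'h. (\<forall>e>0. \<exists>N. \<forall>m\<ge>N. \<forall>n\<ge>N. hnorm ip (X m - X n) < e) \<longrightarrow>
        (\<exists>L. (\<lambda>n. hnorm ip (X n - L)) \<longlonglongrightarrow> 0))"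

definition is_tvs :: "'t::{cvec, topological_space} itself \<Rightarrow> bool" where
  "is_tvs _ \<longleftrightarrow>
     continuous_on UNIV (\<lambda>p :: 't \<times> 't. fst p + snd p) \<and>
     continuous_on UNIV (\<lambda>p :: complex \<times> 't. fst p *\<^sub>C snd p)"

definition dense_cont_embedding ::
  "('h::cvec \<Rightarrow> 'h \<Rightarrow> complex) \<Rightarrow> ('t::{cvec, topological_space} \<Rightarrow> 'h) \<Rightarrow> bool" where
  "dense_cont_embedding ip \<iota> \<longleftrightarrow>
     (\<forall>s t. \<iota> (s + t) = \<iota> s + \<iota> t) \<and>
     (\<forall>c t. \<iota> (c *\<^sub>C t) = c *\<^sub>C \<iota> t) \<and>
     inj \<iota> \<and>
     (\<forall>t e. e > 0 \<longrightarrow> (\<exists>U. open U \<and> t \<in> U \<and> (\<forall>s\<in>U. hnorm ip (\<iota> s - \<iota> t) < e))) \<and>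
     (\<forall>x e. e > 0 \<longrightarrow> (\<exists>t. hnorm ip (x - \<iota> t) < e))"

definition cont_antilinear :: "('t::{cvec, topological_space} \<Rightarrow> complex) \<Rightarrow> bool" where
  "cont_antilinear g \<longleftrightarrow>
     (\<forall>s t. g (s + t) = g s + g t) \<and>
     (\<forall>c t. g (c *\<^sub>C t) = cnj c * g t) \<and>
     continuous_on UNIV g"

definition pair :: "('t \<Rightarrow> complex) \<Rightarrow> 't \<Rightarrow> complex" where
  "pair g f = cnj (g f)"

text \<open>A vector of F_fin(T) is represented by a finitely supported formal linear
  combination \<Psi> :: 't list \<Rightarrow> complex: the list [\<psi>1,...,\<psi>n] stands for the
  symmetric tensor \<psi>1 \<otimes>s ... \<otimes>s \<psi>n = (1/n!) \<Sum>\<sigma> \<psi>\<sigma>(1) \<otimes> ... \<otimes> \<psi>\<sigma>(n) in the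
  n-particle component.  All quantities below (inner products, norms) depend only
  on the vector represented, not on the representative.\<close>

type_synonym 't ffock = "'t list \<Rightarrow> complex"

definition fsupp :: "'t ffock \<Rightarrow> 't list set" where
  "fsupp \<Psi> = {xs. \<Psi> xs \<noteq> 0}"

text \<open>Inner product of F(h) between symmetric simple tensors of equal length n:
  \<langle>\<psi>1\<otimes>s..\<otimes>s\<psi>n, \<phi>1\<otimes>s..\<otimes>s\<phi>n\<rangle> = (1/n!) \<Sum>\<sigma> \<Prod>i \<langle>\<psi>i, \<phi>\<sigma>(i)\<rangle>.\<close>

definition sym_ip :: "('h \<Rightarrow> 'h \<Rightarrow> complex) \<Rightarrow> ('t \<Rightarrow> 'h) \<Rightarrow> 't list \<Rightarrow> 't list \<Rightarrow> complex" where
  "sym_ip ip \<iota> xs ys =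
     (if length xs = length ys then
        (1 / of_nat (fact (length xs))) *
        (\<Sum>\<sigma> | \<sigma> permutes {..<length xs}. \<Prod>i<length xs. ip (\<iota> (xs ! i)) (\<iota> (ys ! \<sigma> i)))
      else 0)"

definition fock_ip :: "('h \<Rightarrow> 'h \<Rightarrow> complex) \<Rightarrow> ('t \<Rightarrow> 'h) \<Rightarrow> 't ffock \<Rightarrow> 't ffock \<Rightarrow> complex" where
  "fock_ip ip \<iota> \<Psi> \<Phi> =
     (\<Sum>xs\<in>fsupp \<Psi>. \<Sum>ys\<in>fsupp \<Phi>. cnj (\<Psi> xs) * \<Phi> ys * sym_ip ip \<iota> xs ys)"

definition fock_norm :: "('h \<Rightarrow> 'h \<Rightarrow> complex) \<Rightarrow> ('t \<Rightarrow> 'h) \<Rightarrow> 't ffock \<Rightarrow> real" where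
  "fock_norm ip \<iota> \<Psi> = sqrt (Re (fock_ip ip \<iota> \<Psi> \<Psi>))"

text \<open>The annihilation operator a(g), defined on simple tensors by
  (a(g)\<Psi>)_n = sqrt(n+1)/(n+1)! \<Sum>\<sigma>\<in>S_(n+1) \<langle>g,\<psi>\<sigma>(1)\<rangle> \<psi>\<sigma>(2)\<otimes>...\<otimes>\<psi>\<sigma>(n+1)
  and extended linearly (indices shifted to start at 0).\<close>

definition annih :: "('t \<Rightarrow> complex) \<Rightarrow> 't ffock \<Rightarrow> 't ffock" where
  "annih g \<Psi> = (\<lambda>ys. \<Sum>xs\<in>fsupp \<Psi>.
     (if xs = [] then 0 else
       \<Psi> xs * (of_real (sqrt (real (length xs))) / of_nat (fact (length xs))) *
       (\<Sum>\<sigma> | \<sigma> permutes {..<length xs}.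
          (if map (\<lambda>i. xs ! \<sigma> i) [1..<length xs] = ys then pair g (xs ! \<sigma> 0) else 0))))"

text \<open>e^{a(g)} = \<Sum>k a(g)^k / k!, a finite sum on F_fin(T) (a(g)^k \<Psi> = 0 for k
  larger than the maximal particle number of \<Psi>).\<close>

definition fdeg :: "'t ffock \<Rightarrow> nat" where
  "fdeg \<Psi> = Max (insert 0 (length ` fsupp \<Psi>))"

definition exp_annih :: "('t \<Rightarrow> complex) \<Rightarrow> 't ffock \<Rightarrow> 't ffock" where
  "exp_annih g \<Psi> = (\<lambda>ys. \<Sum>k\<le>fdeg \<Psi>. ((annih g ^^ k) \<Psi> ys) / of_nat (fact k))"

definition fock_norm_g ::
  "('h \<Rightarrow> 'h \<Rightarrow> complex) \<Rightarrow> ('t \<Rightarrow> 'h) \<Rightarrow> ('t \<Rightarrow> complex) \<Rightarrow> 't ffock \<Rightarrow> real" where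
  "fock_norm_g ip \<iota> g \<Psi> = fock_norm ip \<iota> (exp_annih g \<Psi>)"

definition eps_n :: "nat \<Rightarrow> 't \<Rightarrow> 't ffock" where
  "eps_n n f = (\<lambda>ys. if ys = replicate n f then 1 / of_real (sqrt (real (fact n))) else 0)"

definition eps_partial :: "nat \<Rightarrow> 't \<Rightarrow> 't ffock" where
  "eps_partial N f = (\<lambda>ys. \<Sum>n<N. eps_n n f ys)"

end

theory Submission
  imports Defs
begin

definition phi :: "'t \<Rightarrow> (nat \<Rightarrow> complex) \<Rightarrow> nat \<Rightarrow> 't ffock" where
  "phi f \<alpha> N ys = (if ys = replicate (length ys) f \<and> length ys < N
      then \<alpha> (length ys) / of_real (sqrt (real (fact (length ys)))) else 0)"

lemma phi_cong:
  assumes "\<And>m. m < N \<Longrightarrow> \<alpha> m = \<beta> m"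
  shows "phi f \<alpha> N = phi f \<beta> N"
  using assms by (auto simp: phi_def fun_eq_iff)

lemma phi_rep: "m < N \<Longrightarrow> phi f \<alpha> N (replicate m f) = \<alpha> m / of_real (sqrt (real (fact m)))"
  by (simp add: phi_def)

lemma phi_supp: "phi f \<alpha> N ys \<noteq> 0 \<Longrightarrow> ys \<in> (\<lambda>m. replicate m f) ` {..<N}"
  by (auto simp: phi_def split: if_splits intro!: image_eqI[of _ _ "length ys"])

lemma fsupp_sub: "(\<And>x. \<Psi> x \<noteq> 0 \<Longrightarrow> x \<in> S) \<Longrightarrow> fsupp \<Psi> \<subseteq> S"
  by (auto simp: fsupp_def)

lemma fock_ip_supp:
  assumes "finite S" "finite T" "\<And>x. \<Psi> x \<noteq> 0 \<Longrightarrow> x \<in> S" "\<And>y. \<Phi> y \<noteq> 0 \<Longrightarrow> y \<in> T"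
  shows "fock_ip ip \<iota> \<Psi> \<Phi> = (\<Sum>xs\<in>S. \<Sum>ys\<in>T. cnj (\<Psi> xs) * \<Phi> ys * sym_ip ip \<iota> xs ys)"
proof -
  have s1: "fsupp \<Psi> \<subseteq> S" "fsupp \<Phi> \<subseteq> T" using assms fsupp_sub by metis+
  have "fock_ip ip \<iota> \<Psi> \<Phi> = (\<Sum>xs\<in>S. \<Sum>ys\<in>fsupp \<Phi>. cnj (\<Psi> xs) * \<Phi> ys * sym_ip ip \<iota> xs ys)"
    unfolding fock_ip_def
    by (rule sum.mono_neutral_left) (use s1 assms in \<open>auto simp: fsupp_def\<close>)
  also have "\<dots> = (\<Sum>xs\<in>S. \<Sum>ys\<in>T. cnj (\<Psi> xs) * \<Phi> ys * sym_ip ip \<iota> xs ys)"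
    by (intro sum.cong refl sum.mono_neutral_left) (use s1 assms in \<open>auto simp: fsupp_def\<close>)
  finally show ?thesis .
qed

lemma sym_ip_rep:
  "sym_ip ip \<iota> (replicate m f) (replicate m' f) =
     (if m = m' then ip (\<iota> f) (\<iota> f) ^ m else 0)"
proof (cases "m = m'")
  case True
  have "(\<Sum>\<sigma> | \<sigma> permutes {..<m}. \<Prod>i<m. ip (\<iota> (replicate m f ! i)) (\<iota> (replicate m f ! \<sigma> i)))
      = (\<Sum>\<sigma> | \<sigma> permutes {..<m}. ip (\<iota> f) (\<iota> f) ^ m)"
  proof (rule sum.cong[OF refl])
    fix \<sigma> assume "\<sigma> \<in> {\<sigma>. \<sigma> permutes {..<m}}"
    then have p: "\<sigma> permutes {..<m}" by simp
    have "(\<Prod>i<m. ip (\<iota> (replicate m f ! i)) (\<iota> (replicate m f ! \<sigma> i))) = (\<Prod>i<m. ip (\<iota> f) (\<iota> f))"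
    proof (rule prod.cong[OF refl])
      fix i assume "i \<in> {..<m}"
      then have "\<sigma> i < m" using permutes_in_image[OF p] by auto
      then show "ip (\<iota> (replicate m f ! i)) (\<iota> (replicate m f ! \<sigma> i)) = ip (\<iota> f) (\<iota> f)"
        using \<open>i \<in> {..<m}\<close> by simp
    qed
    then show "(\<Prod>i<m. ip (\<iota> (replicate m f ! i)) (\<iota> (replicate m f ! \<sigma> i))) = ip (\<iota> f) (\<iota> f) ^ m"
      by simp
  qed
  also have "\<dots> = of_nat (fact m) * ip (\<iota> f) (\<iota> f) ^ m"
    using card_permutations[of "{..<m}" m] by simp
  finally show ?thesis using True by (simp add: sym_ip_def)
qed (simp add: sym_ip_def)

lemma inj_rep: "inj_on (\<lambda>m. replicate m f) A"
  by (rule inj_onI) (metis length_replicate)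

lemma fock_ip_phi:
  assumes "Im (ip (\<iota> f) (\<iota> f)) = 0"
  shows "fock_ip ip \<iota> (phi f \<alpha> N) (phi f \<alpha> N) =
     of_real (\<Sum>m<N. (cmod (\<alpha> m))\<^sup>2 * Re (ip (\<iota> f) (\<iota> f)) ^ m / fact m)"
proof -
  define R where "R = Re (ip (\<iota> f) (\<iota> f))"
  have r: "ip (\<iota> f) (\<iota> f) = of_real R" using assms by (simp add: R_def complex_eq_iff)
  let ?S = "(\<lambda>m. replicate m f) ` {..<N}"
  have "fock_ip ip \<iota> (phi f \<alpha> N) (phi f \<alpha> N) =
      (\<Sum>xs\<in>?S. \<Sum>ys\<in>?S. cnj (phi f \<alpha> N xs) * phi f \<alpha> N ys * sym_ip ip \<iota> xs ys)"
    by (rule fock_ip_supp) (auto intro: phi_supp)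
  also have "\<dots> = (\<Sum>m<N. \<Sum>m'<N. cnj (phi f \<alpha> N (replicate m f)) * phi f \<alpha> N (replicate m' f)
        * sym_ip ip \<iota> (replicate m f) (replicate m' f))"
    by (simp add: sum.reindex[OF inj_rep])
  also have "\<dots> = (\<Sum>m<N. cnj (phi f \<alpha> N (replicate m f)) * phi f \<alpha> N (replicate m f) * ip (\<iota> f) (\<iota> f) ^ m)"
    by (simp add: sym_ip_rep if_distrib cong: if_cong)
  also have "\<dots> = (\<Sum>m<N. of_real ((cmod (\<alpha> m))\<^sup>2 * R ^ m / fact m))"
  proof (rule sum.cong[OF refl])
    fix m assume "m \<in> {..<N}"
    then have e: "phi f \<alpha> N (replicate m f) = \<alpha> m / of_real (sqrt (real (fact m)))" by (simp add: phi_rep)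
    have "cnj (\<alpha> m) * \<alpha> m = of_real ((cmod (\<alpha> m))\<^sup>2)" by (metis complex_norm_square mult.commute)
    moreover have "complex_of_real (sqrt (real (fact m))) * complex_of_real (sqrt (real (fact m))) = fact m"
      by (simp flip: of_real_mult)
    ultimately show "cnj (phi f \<alpha> N (replicate m f)) * phi f \<alpha> N (replicate m f) * ip (\<iota> f) (\<iota> f) ^ m
        = of_real ((cmod (\<alpha> m))\<^sup>2 * R ^ m / fact m)"
      unfolding e r by (simp add: field_simps)  
  qed
  finally show ?thesis by (simp add: R_def)
qed

lemma sum_fsupp:
  assumes "finite S" "\<And>x. \<Psi> x \<noteq> 0 \<Longrightarrow> x \<in> S" "\<And>x. \<Psi> x = 0 \<Longrightarrow> F x = 0"
  shows "sum F (fsupp \<Psi>) = sum F S"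
  by (rule sum.mono_neutral_left) (use assms fsupp_sub[of \<Psi> S] in \<open>auto simp: fsupp_def\<close>)

lemma sqrt_fact_Suc:
  "complex_of_real (sqrt (real (Suc L))) / complex_of_real (sqrt (real (fact (Suc L))))
    = 1 / complex_of_real (sqrt (real (fact L)))"
proof -
  have "sqrt (real (fact (Suc L))) = sqrt (real (Suc L)) * sqrt (real (fact L))"
    by (simp add: real_sqrt_mult[symmetric] algebra_simps)
  moreover have "sqrt (real (Suc L)) \<noteq> 0" by simp
  ultimately show ?thesis by (simp add: field_simps del: of_nat_Suc) 
qed

lemma annih_phi:
  "annih g (phi f \<alpha> N) = phi f (\<lambda>m. if m + 1 < N then pair g f * \<alpha> (m + 1) else 0) N"
proof (rule ext)
  fix ys
  define c where "c = pair g f"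
  let ?S = "(\<lambda>m. replicate m f) ` {..<N}"
  define T where "T m = (if m = 0 then 0 else \<alpha> m * of_real (sqrt (real m)) / of_real (sqrt (real (fact m)))
      * (if replicate (m - 1) f = ys then c else 0))" for m
  have "annih g (phi f \<alpha> N) ys = (\<Sum>xs\<in>?S. (if xs = [] then 0 else
       phi f \<alpha> N xs * (of_real (sqrt (real (length xs))) / of_nat (fact (length xs))) *
       (\<Sum>\<sigma> | \<sigma> permutes {..<length xs}.
          (if map (\<lambda>i. xs ! \<sigma> i) [1..<length xs] = ys then pair g (xs ! \<sigma> 0) else 0))))"
    unfolding annih_def by (rule sum_fsupp) (auto intro: phi_supp)
  also have "\<dots> = (\<Sum>m<N. T m)"
    unfolding sum.reindex[OF inj_rep] o_def
  proof (rule sum.cong[OF refl])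
    fix m assume m: "m \<in> {..<N}"
    show "(if replicate m f = [] then 0 else
       phi f \<alpha> N (replicate m f) * (of_real (sqrt (real (length (replicate m f)))) / of_nat (fact (length (replicate m f)))) *
       (\<Sum>\<sigma> | \<sigma> permutes {..<length (replicate m f)}.
          (if map (\<lambda>i. replicate m f ! \<sigma> i) [1..<length (replicate m f)] = ys then pair g (replicate m f ! \<sigma> 0) else 0))) = T m"
    proof (cases "m = 0")
      case True then show ?thesis by (simp add: T_def)
    next
      case False
      have inner: "(\<Sum>\<sigma> | \<sigma> permutes {..<m}.
          (if map (\<lambda>i. replicate m f ! \<sigma> i) [1..<m] = ys then pair g (replicate m f ! \<sigma> 0) else 0))
          = (\<Sum>\<sigma> | \<sigma> permutes {..<m}. (if replicate (m - 1) f = ys then c else 0))"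
      proof (rule sum.cong[OF refl])
        fix \<sigma> assume "\<sigma> \<in> {\<sigma>. \<sigma> permutes {..<m}}"
        then have p: "\<sigma> permutes {..<m}" by simp
        have lt: "i < m \<Longrightarrow> \<sigma> i < m" for i using permutes_in_image[OF p, of i] by auto
        have "map (\<lambda>i. replicate m f ! \<sigma> i) [1..<m] = map (\<lambda>i. f) [1..<m]"
          using lt by (auto intro!: map_cong)
        also have "\<dots> = replicate (m - 1) f" by (simp add: map_replicate_const)
        finally have "map (\<lambda>i. replicate m f ! \<sigma> i) [1..<m] = replicate (m - 1) f" .
        moreover have "replicate m f ! \<sigma> 0 = f" using lt[of 0] False by simp
        ultimately show "(if map (\<lambda>i. replicate m f ! \<sigma> i) [1..<m] = ys then pair g (replicate m f ! \<sigma> 0) else 0)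
           = (if replicate (m - 1) f = ys then c else 0)" by (simp add: c_def)
      qed
      also have "\<dots> = of_nat (fact m) * (if replicate (m - 1) f = ys then c else 0)"
        using card_permutations[of "{..<m}" m] by simp
      finally have inner': "(\<Sum>\<sigma> | \<sigma> permutes {..<m}.
          (if map (\<lambda>i. replicate m f ! \<sigma> i) [1..<m] = ys then pair g (replicate m f ! \<sigma> 0) else 0))
          = of_nat (fact m) * (if replicate (m - 1) f = ys then c else 0)" .
      have "fact m \<noteq> (0::complex)" by simp
      then show ?thesis using False m unfolding length_replicate inner'
        by (simp add: phi_rep T_def field_simps del: of_nat_fact)
    qed
  qed
  also have "\<dots> = phi f (\<lambda>m. if m + 1 < N then c * \<alpha> (m + 1) else 0) N ys"
  proof (cases "ys = replicate (length ys) f")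
    case True
    define L where "L = length ys"
    have "T m = (if m = Suc L then \<alpha> (Suc L) * c / of_real (sqrt (real (fact L))) else 0)" for m
    proof (cases "m = Suc L")
      case True
      then show ?thesis
        using sqrt_fact_Suc[of L] \<open>ys = replicate (length ys) f\<close>
        by (simp add: T_def L_def) (metis (no_types, lifting) mult.commute times_divide_eq_left times_divide_eq_right mult_1_right)
    next
      case False
      have "m \<noteq> 0 \<Longrightarrow> replicate (m - 1) f \<noteq> ys"
        using False by (metis L_def Suc_pred' length_replicate not_gr0) 
      then show ?thesis using False by (simp add: T_def)
    qed
    then have "(\<Sum>m<N. T m) = (if Suc L < N then \<alpha> (Suc L) * c / of_real (sqrt (real (fact L))) else 0)"
      by (simp add: sum.delta')
    then show ?thesis using True by (auto simp: phi_def L_def mult.commute)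
  next
    case False
    then have "T m = 0" for m
      by (auto simp: T_def)
    then show ?thesis using False by (simp add: phi_def)
  qed
  finally show "annih g (phi f \<alpha> N) ys = phi f (\<lambda>m. if m + 1 < N then pair g f * \<alpha> (m + 1) else 0) N ys"
    unfolding c_def .
qed

lemma annih_pow_phi:
  "(annih g ^^ k) (phi f \<alpha> N) = phi f (\<lambda>m. if m + k < N then pair g f ^ k * \<alpha> (m + k) else 0) N"
proof (induction k)
  case 0
  show ?case by (simp, rule phi_cong, simp)
next
  case (Suc k)
  show ?case
    by (simp add: Suc annih_phi, rule phi_cong) (auto simp: algebra_simps)
qed

lemma fdeg_phi:
  assumes "m < N" "\<alpha> m \<noteq> 0"
  shows "m \<le> fdeg (phi f \<alpha> N)"
proof -
  have fin: "finite (fsupp (phi f \<alpha> N))"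
    by (rule finite_subset[OF fsupp_sub[OF phi_supp]]) auto
  have "replicate m f \<in> fsupp (phi f \<alpha> N)"
    using assms by (simp add: fsupp_def phi_rep)
  then have "m \<in> insert 0 (length ` fsupp (phi f \<alpha> N))"
    by (metis imageI insertI2 length_replicate)
  then show ?thesis unfolding fdeg_def using fin by simp
qed

lemma exp_annih_phi:
  "exp_annih g (phi f \<alpha> N) =
     phi f (\<lambda>m. \<Sum>k<N. if m + k < N then pair g f ^ k * \<alpha> (m + k) / fact k else 0) N"
proof (rule ext)
  fix ys
  define D where "D = fdeg (phi f \<alpha> N)"
  define c where "c = pair g f"
  show "exp_annih g (phi f \<alpha> N) ys =
     phi f (\<lambda>m. \<Sum>k<N. if m + k < N then pair g f ^ k * \<alpha> (m + k) / fact k else 0) N ys"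
  proof (cases "ys = replicate (length ys) f \<and> length ys < N")
    case True
    define L where "L = length ys"
    define F where "F k = (if L + k < N then c ^ k * \<alpha> (L + k) / fact k else 0)" for k
    have F0: "F k = 0" if "k > D \<or> k \<ge> N" for k
    proof (cases "L + k < N")
      case True
      then have "k > D" using that by auto
      then have "\<alpha> (L + k) = 0" using fdeg_phi[of "L+k" N \<alpha> f] True by (auto simp: D_def)
      then show ?thesis by (simp add: F_def)
    qed (simp add: F_def)
    have "exp_annih g (phi f \<alpha> N) ys = (\<Sum>k\<le>D. F k) / of_real (sqrt (real (fact L)))"
      unfolding exp_annih_def D_def[symmetric] annih_pow_phi sum_divide_distrib
      by (rule sum.cong[OF refl]) (use True in \<open>simp add: phi_def F_def L_def c_def\<close>)
    also have "(\<Sum>k\<le>D. F k) = (\<Sum>k\<in>{..D} \<union> {..<N}. F k)"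
      by (rule sum.mono_neutral_left) (use F0 in auto)
    also have "\<dots> = (\<Sum>k<N. F k)"
      by (rule sum.mono_neutral_right) (use F0 in auto)
    finally have 1: "exp_annih g (phi f \<alpha> N) ys = (\<Sum>k<N. F k) / of_real (sqrt (real (fact L)))" .
    have 2: "phi f (\<lambda>m. \<Sum>k<N. if m + k < N then pair g f ^ k * \<alpha> (m + k) / fact k else 0) N ys
       = (\<Sum>k<N. F k) / of_real (sqrt (real (fact L)))"
      unfolding F_def L_def c_def by (subst phi_def) (use True in simp)
    show ?thesis using 1 2 by simp
  next
    case False
    have z: "phi f \<beta> N ys = 0" for \<beta> using False unfolding phi_def by auto
    show ?thesis
      unfolding exp_annih_def annih_pow_phi z by simp
  qed
qed

lemma phi_diff:
  "(\<lambda>ys. phi f \<alpha> N ys - z * phi f \<beta> N ys) = phi f (\<lambda>m. \<alpha> m - z * \<beta> m) N"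
  by (auto simp: phi_def fun_eq_iff diff_divide_distrib)

lemma eps_n_phi: "eps_n n f = phi f (\<lambda>m. if m = n then 1 else 0) (Suc n)"
  by (auto simp: eps_n_def phi_def fun_eq_iff)

lemma eps_partial_phi: "eps_partial N f = phi f (\<lambda>m. 1) N"
proof (rule ext)
  fix ys
  show "eps_partial N f ys = phi f (\<lambda>m. 1) N ys"
  proof (cases "ys = replicate (length ys) f")
    case True
    have "eps_n n f ys = (if n = length ys then 1 / of_real (sqrt (real (fact (length ys)))) else 0)" for n
      using True by (auto simp: eps_n_def)
    then show ?thesis using True by (simp add: eps_partial_def phi_def sum.delta')
  next
    case False
    then have "eps_n n f ys = 0" for n by (auto simp: eps_n_def)
    then show ?thesis using False by (simp add: eps_partial_def phi_def)
  qed
qed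

lemma sqrt_amgm:
  fixes S :: real assumes "0 \<le> S"
  shows "sqrt S \<le> ((4::real) ^ n * S + (1/4) ^ n) / 2"
proof -
  have "sqrt S = sqrt ((4 ^ n * S) * (1/4) ^ n)"
    by (simp add: power_one_over field_simps)
  also have "\<dots> \<le> ((4::real) ^ n * S + (1/4) ^ n) / 2"
    by (rule arith_geo_mean_sqrt) (use assms in auto)
  finally show ?thesis .
qed

lemma binom_fact:
  fixes A B :: real
  shows "(\<Sum>m\<le>n. A ^ (n - m) / fact (n - m) * (B ^ m / fact m)) = (A + B) ^ n / fact n"
proof -
  have "(A + B) ^ n / fact n = (\<Sum>m\<le>n. of_nat (n choose m) * B ^ m * A ^ (n - m)) / fact n"
    using binomial_ring[of B A n] by (simp add: add.commute)
  also have "\<dots> = (\<Sum>m\<le>n. A ^ (n - m) / fact (n - m) * (B ^ m / fact m))"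
    unfolding sum_divide_distrib
  proof (rule sum.cong[OF refl])
    fix m assume "m \<in> {..n}"
    then have "m \<le> n" by simp
    then show "of_nat (n choose m) * B ^ m * A ^ (n - m) / fact n = A ^ (n - m) / fact (n - m) * (B ^ m / fact m)"
      by (simp add: binomial_fact field_simps)
  qed
  finally show ?thesis by simp
qed

lemma summable_pow_fact: "summable (\<lambda>n. (X::real) ^ n / fact n)"
  using summable_exp[of X] by (simp add: divide_inverse mult.commute)

lemma fact_mult_le: "fact i * fact j \<le> (fact (i + j) :: real)"
proof -
  have "fact i * fact j dvd (fact (i + j) :: nat)" by (rule fact_fact_dvd_fact)
  then have "fact i * fact j \<le> (fact (i + j) :: nat)" by (rule dvd_imp_le) simp
  then show ?thesis by (metis of_nat_fact of_nat_le_iff of_nat_mult)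
qed

lemma exp_tail:
  fixes c :: complex
  shows "cmod (exp c - (\<Sum>k<j. c ^ k / fact k)) \<le> cmod c ^ j / fact j * exp (cmod c)"
proof -
  have s: "(\<lambda>n. c ^ n / fact n) sums exp c"
    using exp_converges[of c] by (simp add: scaleR_conv_of_real divide_inverse mult.commute)
  have s2: "(\<lambda>i. c ^ (i + j) / fact (i + j)) sums (exp c - (\<Sum>k<j. c ^ k / fact k))"
    using sums_split_initial_segment[OF s, of j] by simp
  have nrm: "norm (c ^ (i + j) / fact (i + j)) = cmod c ^ (i + j) / fact (i + j)" for i
    by (simp add: norm_divide norm_power)
  have sn: "summable (\<lambda>i. norm (c ^ (i + j) / fact (i + j)))"
    unfolding nrm using summable_ignore_initial_segment[OF summable_pow_fact[of "cmod c"], of j] by simp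
  have "cmod (exp c - (\<Sum>k<j. c ^ k / fact k)) = norm (\<Sum>i. c ^ (i + j) / fact (i + j))"
    using s2 by (simp add: sums_iff)
  also have "\<dots> \<le> (\<Sum>i. norm (c ^ (i + j) / fact (i + j)))" by (rule summable_norm[OF sn])
  also have "\<dots> \<le> (\<Sum>i. cmod c ^ j / fact j * (cmod c ^ i / fact i))"
  proof (rule suminf_le)
    fix i
    have "fact i * fact j \<le> (fact (i + j) :: real)" by (rule fact_mult_le)
    then have "cmod c ^ (i + j) / fact (i + j) \<le> cmod c ^ (i + j) / (fact i * fact j)"
      by (intro divide_left_mono) auto
    then show "norm (c ^ (i + j) / fact (i + j)) \<le> cmod c ^ j / fact j * (cmod c ^ i / fact i)"
      unfolding nrm by (simp add: power_add field_simps)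
  next
    show "summable (\<lambda>i. norm (c ^ (i + j) / fact (i + j)))" by (rule sn)
    show "summable (\<lambda>i. cmod c ^ j / fact j * (cmod c ^ i / fact i))"
      by (rule summable_mult[OF summable_pow_fact])
  qed
  also have "\<dots> = cmod c ^ j / fact j * exp (cmod c)"
  proof -
    have "(\<lambda>i. cmod c ^ i / fact i) sums exp (cmod c)"
      using exp_converges[of "cmod c"] by (simp add: divide_inverse mult.commute)
    then show ?thesis using suminf_mult[OF summable_pow_fact[of "cmod c"], of "cmod c ^ j / fact j"]
      by (simp add: sums_iff)
  qed
  finally show ?thesis .
qed

lemma fock_norm_phi:
  assumes "Im (ip (\<iota> f) (\<iota> f)) = 0"
  shows "fock_norm ip \<iota> (phi f \<alpha> N) = sqrt (\<Sum>m<N. (cmod (\<alpha> m))\<^sup>2 * Re (ip (\<iota> f) (\<iota> f)) ^ m / fact m)"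
proof -
  have e: "fock_ip ip \<iota> (phi f \<alpha> N) (phi f \<alpha> N) =
     of_real (\<Sum>m<N. (cmod (\<alpha> m))\<^sup>2 * Re (ip (\<iota> f) (\<iota> f)) ^ m / fact m)"
    using assms by (rule fock_ip_phi)
  show ?thesis unfolding fock_norm_def e Re_complex_of_real by (rule refl)
qed

lemma sum_trunc:
  "(\<Sum>k<(N::nat). if m + k < N then h k else 0) = (\<Sum>k<N - m. h k)"
  by (rule sum.mono_neutral_cong_right) (auto simp: less_diff_conv add.commute)

lemma sq_fact_bound:
  fixes x :: real assumes "0 \<le> x"
  shows "(x ^ j / fact j)\<^sup>2 \<le> (x\<^sup>2) ^ j / fact j"
proof -
  have "(x ^ j / fact j)\<^sup>2 = (x\<^sup>2) ^ j / fact j / fact j"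
    by (simp add: power2_eq_square power_mult_distrib field_simps)
  also have "\<dots> \<le> (x\<^sup>2) ^ j / fact j"
  proof -
    have "1 \<le> (fact j :: real)" by simp
    then have "(x\<^sup>2) ^ j * 1 \<le> (x\<^sup>2) ^ j * fact j" by (intro mult_left_mono) auto
    then show ?thesis by (simp add: divide_le_eq)
  qed
  finally show ?thesis .
qed

theorem lemma2p15:
  fixes ip :: "'h::cvec \<Rightarrow> 'h \<Rightarrow> complex"
    and \<iota> :: "'t::{cvec, topological_space} \<Rightarrow> 'h"
    and g :: "'t \<Rightarrow> complex"
    and f :: 't
  assumes "is_hilbert ip"
    and "is_tvs TYPE('t)"
    and "dense_cont_embedding ip \<iota>"
    and "cont_antilinear g"
  shows "summable (\<lambda>n. fock_norm_g ip \<iota> g (eps_n n f)) \<and>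
         summable (\<lambda>n. fock_norm ip \<iota> (eps_n n f)) \<and>
         (\<lambda>N. fock_norm ip \<iota>
            (\<lambda>ys. exp_annih g (eps_partial N f) ys - exp (pair g f) * eps_partial N f ys))
         \<longlonglongrightarrow> 0"
proof -
  define c where "c = pair g f"
  define R where "R = Re (ip (\<iota> f) (\<iota> f))"
  define A where "A = (cmod c)\<^sup>2"
  have Im0: "Im (ip (\<iota> f) (\<iota> f)) = 0" and R0: "0 \<le> R"
  proof -
    have "\<forall>x. Im (ip x x) = 0 \<and> Re (ip x x) \<ge> 0" using assms(1) unfolding is_hilbert_def by (elim conjE) assumption
    then show "Im (ip (\<iota> f) (\<iota> f)) = 0" "0 \<le> R" unfolding R_def by auto
  qed
  have A0: "0 \<le> A" by (simp add: A_def)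
  have geo: "summable (\<lambda>n. (1/4::real) ^ n)" by (rule summable_geometric) simp
  have n2: "fock_norm ip \<iota> (eps_n n f) = sqrt (R ^ n / fact n)" for n
  proof -
    have "(\<Sum>m<Suc n. (cmod (if m = n then 1 else 0))\<^sup>2 * R ^ m / fact m) = R ^ n / fact n"
      by (simp add: if_distrib cong: if_cong)
    then show ?thesis unfolding eps_n_phi fock_norm_phi[of ip \<iota> f, OF Im0] R_def by simp
  qed
  have S2: "summable (\<lambda>n. fock_norm ip \<iota> (eps_n n f))"
  proof (rule summable_comparison_test')
    show "summable (\<lambda>n. ((4 * R) ^ n / fact n + (1/4) ^ n) / 2)"
      by (intro summable_divide summable_add summable_pow_fact geo)
    fix n :: nat
    have "sqrt (R ^ n / fact n) \<le> (4 ^ n * (R ^ n / fact n) + (1/4) ^ n) / 2"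
      by (rule sqrt_amgm) (use R0 in simp)
    moreover have "0 \<le> sqrt (R ^ n / fact n)" using R0 by simp
    ultimately show "norm (fock_norm ip \<iota> (eps_n n f)) \<le> ((4 * R) ^ n / fact n + (1/4) ^ n) / 2"
      unfolding n2 by (simp add: power_mult_distrib)
  qed
  have ea: "exp_annih g (eps_n n f) = phi f (\<lambda>m. if m \<le> n then c ^ (n - m) / fact (n - m) else 0) (Suc n)" for n
    unfolding eps_n_phi exp_annih_phi c_def[symmetric]
  proof (rule phi_cong)
    fix m assume m: "m < Suc n"
    have "(\<Sum>k<Suc n. if m + k < Suc n then c ^ k * (if m + k = n then 1 else 0) / fact k else 0)
        = (\<Sum>k<Suc n - m. c ^ k * (if m + k = n then 1 else 0) / fact k)"
      by (rule sum_trunc)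
    also have "\<dots> = (\<Sum>k<Suc n - m. if k = n - m then c ^ (n - m) / fact (n - m) else 0)"
      by (rule sum.cong[OF refl]) (use m in auto)
    also have "\<dots> = c ^ (n - m) / fact (n - m)"
      using m by (simp add: sum.delta')
    finally show "(\<Sum>k<Suc n. if m + k < Suc n then c ^ k * (if m + k = n then 1 else 0) / fact k else 0)
        = (if m \<le> n then c ^ (n - m) / fact (n - m) else 0)" using m by simp
  qed
  define S where "S n = (\<Sum>m<Suc n. (cmod (if m \<le> n then c ^ (n - m) / fact (n - m) else 0))\<^sup>2 * R ^ m / fact m)" for n
  have n1: "fock_norm_g ip \<iota> g (eps_n n f) = sqrt (S n)" for n
    unfolding fock_norm_g_def ea fock_norm_phi[of ip \<iota> f, OF Im0] S_def R_def ..
  have S0: "0 \<le> S n" for n unfolding S_def using R0 by (intro sum_nonneg) auto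
  have Sb: "4 ^ n * S n \<le> (4 * A + 4 * R) ^ n / fact n" for n
  proof -
    have "4 ^ n * S n = (\<Sum>m\<le>n. 4 ^ n * ((cmod (c ^ (n - m) / fact (n - m)))\<^sup>2 * R ^ m / fact m))"
      unfolding S_def sum_distrib_left lessThan_Suc_atMost by (rule sum.cong) auto
    also have "\<dots> \<le> (\<Sum>m\<le>n. (4 * A) ^ (n - m) / fact (n - m) * ((4 * R) ^ m / fact m))"
    proof (rule sum_mono)
      fix m assume "m \<in> {..n}"
      then have mn: "m \<le> n" by simp
      have p4: "(4::real) ^ n = 4 ^ (n - m) * 4 ^ m" using mn by (simp flip: power_add)
      have "(cmod (c ^ (n - m) / fact (n - m)))\<^sup>2 = (cmod c ^ (n - m) / fact (n - m))\<^sup>2"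
        by (simp add: norm_divide norm_power)
      also have "\<dots> \<le> A ^ (n - m) / fact (n - m)" unfolding A_def by (rule sq_fact_bound) simp
      finally have q: "(cmod (c ^ (n - m) / fact (n - m)))\<^sup>2 \<le> A ^ (n - m) / fact (n - m)" .
      have "4 ^ n * ((cmod (c ^ (n - m) / fact (n - m)))\<^sup>2 * R ^ m / fact m)
          = (4 ^ (n - m) * (cmod (c ^ (n - m) / fact (n - m)))\<^sup>2) * (4 ^ m * R ^ m / fact m)"
        unfolding p4 by (simp add: field_simps)
      also have "\<dots> \<le> (4 ^ (n - m) * (A ^ (n - m) / fact (n - m))) * (4 ^ m * R ^ m / fact m)"
        using q R0 by (intro mult_right_mono mult_left_mono) auto
      finally show "4 ^ n * ((cmod (c ^ (n - m) / fact (n - m)))\<^sup>2 * R ^ m / fact m)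
          \<le> (4 * A) ^ (n - m) / fact (n - m) * ((4 * R) ^ m / fact m)"
        by (simp add: power_mult_distrib)
    qed
    also have "\<dots> = (4 * A + 4 * R) ^ n / fact n" by (rule binom_fact)
    finally show ?thesis .
  qed
  have S1: "summable (\<lambda>n. fock_norm_g ip \<iota> g (eps_n n f))"
  proof (rule summable_comparison_test')
    show "summable (\<lambda>n. ((4 * A + 4 * R) ^ n / fact n + (1/4) ^ n) / 2)"
      by (intro summable_divide summable_add summable_pow_fact geo)
    fix n :: nat
    have "sqrt (S n) \<le> (4 ^ n * S n + (1/4) ^ n) / 2" by (rule sqrt_amgm[OF S0])
    also have "\<dots> \<le> ((4 * A + 4 * R) ^ n / fact n + (1/4) ^ n) / 2" using Sb[of n] by (intro divide_right_mono add_right_mono) simp_all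
    finally show "norm (fock_norm_g ip \<iota> g (eps_n n f)) \<le> ((4 * A + 4 * R) ^ n / fact n + (1/4) ^ n) / 2"
      unfolding n1 using S0[of n] by simp
  qed
  define \<gamma> where "\<gamma> N m = (\<Sum>k<N. if m + k < N then c ^ k * 1 / fact k else 0) - exp c * 1" for N m
  define T where "T N = (\<Sum>m<N. (cmod (\<gamma> N m))\<^sup>2 * R ^ m / fact m)" for N
  define E where "E = (exp (cmod c))\<^sup>2"
  have n3: "fock_norm ip \<iota> (\<lambda>ys. exp_annih g (eps_partial N f) ys - exp (pair g f) * eps_partial N f ys)
      = sqrt (T N)" for N
    unfolding eps_partial_phi exp_annih_phi phi_diff fock_norm_phi[of ip \<iota> f, OF Im0] T_def \<gamma>_def c_def R_def ..
  have T0: "0 \<le> T N" for N unfolding T_def using R0 by (intro sum_nonneg) auto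
  have Tb: "T N \<le> E * ((A + R) ^ N / fact N)" for N
  proof -
    have "T N \<le> (\<Sum>m<N. E * (A ^ (N - m) / fact (N - m) * (R ^ m / fact m)))"
      unfolding T_def
    proof (rule sum_mono)
      fix m assume "m \<in> {..<N}"
      then have mN: "m < N" by simp
      have "\<gamma> N m = (\<Sum>k<N - m. c ^ k / fact k) - exp c"
        unfolding \<gamma>_def using sum_trunc[where N=N and m=m and h="\<lambda>k. c ^ k / fact k"] by simp
      then have "cmod (\<gamma> N m) = cmod (exp c - (\<Sum>k<N - m. c ^ k / fact k))"
        by (simp add: norm_minus_commute)
      also have "\<dots> \<le> cmod c ^ (N - m) / fact (N - m) * exp (cmod c)" by (rule exp_tail)
      finally have "(cmod (\<gamma> N m))\<^sup>2 \<le> (cmod c ^ (N - m) / fact (N - m) * exp (cmod c))\<^sup>2"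
        by (intro power_mono) auto
      also have "\<dots> = (cmod c ^ (N - m) / fact (N - m))\<^sup>2 * E"
        unfolding E_def by (simp only: power_mult_distrib)
      also have "\<dots> \<le> A ^ (N - m) / fact (N - m) * E"
        unfolding A_def by (intro mult_right_mono sq_fact_bound) (auto simp: E_def)
      finally have "(cmod (\<gamma> N m))\<^sup>2 \<le> A ^ (N - m) / fact (N - m) * E" .
      then have "(cmod (\<gamma> N m))\<^sup>2 * (R ^ m / fact m) \<le> A ^ (N - m) / fact (N - m) * E * (R ^ m / fact m)"
        using R0 by (intro mult_right_mono) auto
      then show "(cmod (\<gamma> N m))\<^sup>2 * R ^ m / fact m \<le> E * (A ^ (N - m) / fact (N - m) * (R ^ m / fact m))"
        by (simp add: field_simps)
    qed
    also have "\<dots> \<le> (\<Sum>m\<le>N. E * (A ^ (N - m) / fact (N - m) * (R ^ m / fact m)))"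
      by (rule sum_mono2) (use A0 R0 in \<open>auto simp: E_def\<close>)
    also have "\<dots> = E * ((A + R) ^ N / fact N)"
      unfolding sum_distrib_left[symmetric] binom_fact ..
    finally show ?thesis .
  qed
  have lim0: "(\<lambda>N. E * ((A + R) ^ N / fact N)) \<longlonglongrightarrow> 0"
    using tendsto_mult_left[OF summable_LIMSEQ_zero[OF summable_pow_fact[of "A + R"]], of E] by simp
  have "T \<longlonglongrightarrow> 0"
    by (rule tendsto_sandwich[OF _ _ tendsto_const lim0]) (use T0 Tb in auto)
  then have "(\<lambda>N. sqrt (T N)) \<longlonglongrightarrow> 0"
    using tendsto_real_sqrt[of T 0] by simp
  then have S3: "(\<lambda>N. fock_norm ip \<iota>
            (\<lambda>ys. exp_annih g (eps_partial N f) ys - exp (pair g f) * eps_partial N f ys)) \<longlonglongrightarrow> 0"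
    unfolding n3 .
  show ?thesis using S1 S2 S3 by blast
qed

end
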